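(* Let $(S,* )$ be a finite cycle set of size $n$ and class $d>1$, with germ $\overline G$, and let $d=p_1^{a_1}\cdots p_r^{a_r}$ be the prime factorization of $d$. Put $\alpha_i=p_i^{a_i}$ and $\beta_i=d/\alpha_i$. Then: (i) for each $i$, $\overline G^{[\beta_i]}$ is a Sylow $p_i$-subgroup of $\overline G$; (ii) for all $i,j$, $\overline G^{[\beta_i]}\,\overline G^{[\beta_j]}=\overline G^{[\beta_j]}\,\overline G^{[\beta_i]}$ as subsets of $\overline G$; (iii) $\overline G=\overline G^{[\beta_1]}\,\overline G^{[\beta_2]}\cdots\overline G^{[\beta_r]}$.
   Context: A cycle set is a set $S$ with a binary operation $*$ such that for every $s$ the map $t\mapsto s*t$ is a bijection and $(s*t)*(s*u)=(t*s)*(t*u)$ for all $s,t,u$. Write $S=\{s_1,\dots,s_n\}$, let $\psi(s)\in\mathfrak S_n$ satisfy $s_i*s_j=s_{\psi(s_i)(j)}$, $T(s)=s*s$, and $\psi_k(s)=\psi(T^{k-1}(s))\circ\cdots\circ\psi(s)$. The class $d$ is the least $d\ge1$ with $\psi_d(s)=\mathrm{id}$ for all $s$. $P_\sigma$ is the matrix with $1$ at $(i,\sigma(i))$, zeros elsewhere; $\zeta_d=e^{2i\pi/d}$. The germ $\overline G$ is the subgroup of $GL_n(\mathbb C)$ generated by $\bar s_i=\mathrm{diag}(1,\dots,\zeta_d,\dots,1)P_{\psi(s_i)}$ ($\zeta_d$ in position $i$); it has order $d^n$. For $s\in S$ and $k\ge1$, let $\overline{s^{[k]}}=\bar s\,\overline{T(s)}\cdots\overline{T^{k-1}(s)}\in\overline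 G$, and let $\overline G^{[k]}$ be the subgroup of $\overline G$ generated by $\{\overline{s^{[k]}}: s\in S\}$. Products of subgroups are set products $AB=\{ab\}$. *)

theory Defs
  imports "HOL-Algebra.Coset" "HOL-Algebra.Generated_Groups" "Jordan_Normal_Form.Matrix"
    "HOL-Computational_Algebra.Primes"
begin

text \<open>A finite set of size n is identified with {0..<n}; the cycle set operation is
  op i j = index of s_i * s_j, i.e. psi(s_i)(j) = op i j.\<close>

definition cycle_set :: "nat \<Rightarrow> (nat \<Rightarrow> nat \<Rightarrow> nat) \<Rightarrow> bool" where
  "cycle_set n op \<longleftrightarrow>
     (\<forall>i<n. bij_betw (op i) {0..<n} {0..<n}) \<and>
     (\<forall>s<n. \<forall>t<n. \<forall>u<n. op (op s t) (op s u) = op (op t s) (op t u))"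

definition T_map :: "(nat \<Rightarrow> nat \<Rightarrow> nat) \<Rightarrow> nat \<Rightarrow> nat" where
  "T_map op s = op s s"

fun psik :: "(nat \<Rightarrow> nat \<Rightarrow> nat) \<Rightarrow> nat \<Rightarrow> nat \<Rightarrow> nat \<Rightarrow> nat" where
  "psik op 0 s = id"
| "psik op (Suc k) s = op ((T_map op ^^ k) s) \<circ> psik op k s"

definition is_class :: "nat \<Rightarrow> (nat \<Rightarrow> nat \<Rightarrow> nat) \<Rightarrow> nat \<Rightarrow> bool" where
  "is_class n op d \<longleftrightarrow> d \<ge> 1 \<and> (\<forall>s<n. \<forall>j<n. psik op d s j = j) \<and>
     (\<forall>d'. 1 \<le> d' \<and> d' < d \<longrightarrow> \<not> (\<forall>s<n. \<forall>j<n. psik op d' s j = j))"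

definition GL :: "nat \<Rightarrow> complex mat monoid" where
  "GL n = \<lparr>carrier = {A \<in> carrier_mat n n. invertible_mat A}, monoid.mult = (*), monoid.one = 1\<^sub>m n\<rparr>"

text \<open>bar s_i = diag(1,..,zeta_d (position i),..,1) * P_{psi(s_i)},
  where P_sigma has 1 at (a, sigma a).\<close>
definition bar_gen :: "nat \<Rightarrow> (nat \<Rightarrow> nat \<Rightarrow> nat) \<Rightarrow> nat \<Rightarrow> nat \<Rightarrow> complex mat" where
  "bar_gen n op d i = mat n n (\<lambda>(a, b). (if a = i then cis (2 * pi / real d) else 1) *
                                        (if b = op i a then 1 else 0))"

definition germ :: "nat \<Rightarrow> (nat \<Rightarrow> nat \<Rightarrow> nat) \<Rightarrow> nat \<Rightarrow> complex mat monoid" where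
  "germ n op d = (GL n)\<lparr>carrier := generate (GL n) (bar_gen n op d ` {0..<n})\<rparr>"

text \<open>bar(s^[k]) = bar s * bar(T s) * ... * bar(T^(k-1) s)\<close>
definition bar_pow :: "nat \<Rightarrow> (nat \<Rightarrow> nat \<Rightarrow> nat) \<Rightarrow> nat \<Rightarrow> nat \<Rightarrow> nat \<Rightarrow> complex mat" where
  "bar_pow n op d k s = foldr (\<lambda>j acc. bar_gen n op d ((T_map op ^^ j) s) * acc) [0..<k] (1\<^sub>m n)"

definition germ_k :: "nat \<Rightarrow> (nat \<Rightarrow> nat \<Rightarrow> nat) \<Rightarrow> nat \<Rightarrow> nat \<Rightarrow> complex mat set" where
  "germ_k n op d k = generate (germ n op d) (bar_pow n op d k ` {0..<n})"

definition sylow_subgroup :: "('a, 'b) monoid_scheme \<Rightarrow> nat \<Rightarrow> 'a set \<Rightarrow> bool" where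
  "sylow_subgroup G p P \<longleftrightarrow> subgroup P G \<and> card P = p ^ multiplicity p (order G)"

end

theory Submission
  imports Defs
begin


definition stp :: "nat \<Rightarrow> (nat \<Rightarrow> nat \<Rightarrow> nat) \<Rightarrow> (nat \<Rightarrow> nat) \<Rightarrow> nat \<Rightarrow> nat \<Rightarrow> nat" where
  "stp n op f i = (\<lambda>x. if x < n then op (f i) (f x) else x)"

definition sig :: "nat \<Rightarrow> (nat \<Rightarrow> nat \<Rightarrow> nat) \<Rightarrow> nat list \<Rightarrow> nat \<Rightarrow> nat" where
  "sig n op l = fold (\<lambda>i f. stp n op f i) l id"

lemma sig_Nil[simp]: "sig n op [] = id"
  by (simp add: sig_def)

lemma sig_snoc[simp]: "sig n op (l @ [i]) = stp n op (sig n op l) i"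
  by (simp add: sig_def)

lemma sig_append: "sig n op (l @ r) = fold (\<lambda>i f. stp n op f i) r (sig n op l)"
  by (simp add: sig_def)

lemma sig_props:
  assumes cs: "cycle_set n op" and l: "set l \<subseteq> {..<n}"
  shows "(\<forall>x. x \<ge> n \<longrightarrow> sig n op l x = x) \<and> bij_betw (sig n op l) {0..<n} {0..<n}"
  using l
proof (induction l rule: rev_induct)
  case Nil
  then show ?case by (simp add: bij_betw_def)
next
  case (snoc i l)
  let ?f = "sig n op l"
  from snoc have IH: "\<forall>x. x \<ge> n \<longrightarrow> ?f x = x" "bij_betw ?f {0..<n} {0..<n}" and i: "i < n" by auto
  have fi: "?f i < n" using IH(2) i by (auto dest: bij_betwE)
  have b: "bij_betw (op (?f i)) {0..<n} {0..<n}" using cs fi unfolding cycle_set_def by auto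
  have "bij_betw (op (?f i) \<circ> ?f) {0..<n} {0..<n}" using bij_betw_trans[OF IH(2) b] .
  moreover have "\<And>x. x \<in> {0..<n} \<Longrightarrow> (op (?f i) \<circ> ?f) x = stp n op ?f i x" by (simp add: stp_def)
  ultimately have "bij_betw (stp n op ?f i) {0..<n} {0..<n}"
    by (rule bij_betw_cong[THEN iffD1, rotated])
  then show ?case by (simp add: stp_def)
qed

lemma sig_out: "cycle_set n op \<Longrightarrow> set l \<subseteq> {..<n} \<Longrightarrow> x \<ge> n \<Longrightarrow> sig n op l x = x"
  using sig_props by blast

lemma sig_bij: "cycle_set n op \<Longrightarrow> set l \<subseteq> {..<n} \<Longrightarrow> bij_betw (sig n op l) {0..<n} {0..<n}"
  using sig_props by blast

lemma sig_lt: "cycle_set n op \<Longrightarrow> set l \<subseteq> {..<n} \<Longrightarrow> x < n \<Longrightarrow> sig n op l x < n"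
  using sig_bij[of n op l] by (auto dest: bij_betwE)

lemma sig_lt_iff: "cycle_set n op \<Longrightarrow> set l \<subseteq> {..<n} \<Longrightarrow> sig n op l x < n \<longleftrightarrow> x < n"
  using sig_lt sig_out by (metis not_le)

lemma sig_inj: "cycle_set n op \<Longrightarrow> set l \<subseteq> {..<n} \<Longrightarrow> inj (sig n op l)"
proof (rule injI)
  fix x y assume cs: "cycle_set n op" and l: "set l \<subseteq> {..<n}" and e: "sig n op l x = sig n op l y"
  have ij: "inj_on (sig n op l) {0..<n}" using sig_bij[OF cs l] bij_betw_def by blast
  show "x = y"
  proof (cases "x < n")
    case True
    then have "y < n" using e sig_lt_iff[OF cs l] by metis
    then show ?thesis using True e ij by (auto dest: inj_onD)
  next
    case False
    then have "y \<ge> n" using e sig_lt_iff[OF cs l] by (metis not_le)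
    then show ?thesis using False e sig_out[OF cs l] by (metis not_le)
  qed
qed

lemma sig_swap:
  assumes cs: "cycle_set n op" and l: "set l \<subseteq> {..<n}" and i: "i < n" and k: "k < n"
  shows "sig n op (l @ [i, k]) = sig n op (l @ [k, i])"
proof -
  let ?f = "sig n op l"
  have fi: "?f i < n" "?f k < n" using sig_lt[OF cs l] i k by auto
  have A: "\<And>x. x < n \<Longrightarrow> op (op (?f i) (?f k)) (op (?f i) (?f x)) = op (op (?f k) (?f i)) (op (?f k) (?f x))"
    using cs fi sig_lt[OF cs l] unfolding cycle_set_def by blast
  have e1: "sig n op (l @ [i, k]) = stp n op (stp n op ?f i) k"
    using sig_append[of n op l "[i,k]"] by simp
  have e2: "sig n op (l @ [k, i]) = stp n op (stp n op ?f k) i"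
    using sig_append[of n op l "[k,i]"] by simp
  show ?thesis unfolding e1 e2
  proof (rule ext)
    fix x show "stp n op (stp n op ?f i) k x = stp n op (stp n op ?f k) i x"
      using A[of x] i k by (simp add: stp_def)
  qed
qed

lemma sig_move:
  assumes cs: "cycle_set n op"
  shows "set (p1 @ [k] @ p2) \<subseteq> {..<n} \<Longrightarrow> sig n op (p1 @ [k] @ p2) = sig n op (p1 @ p2 @ [k])"
proof (induction p2 arbitrary: p1)
  case Nil
  then show ?case by simp
next
  case (Cons x p2)
  have "sig n op (p1 @ [k] @ x # p2) = fold (\<lambda>i f. stp n op f i) p2 (sig n op (p1 @ [k, x]))"
    using sig_append[of n op "p1 @ [k, x]" p2] by simp
  also have "sig n op (p1 @ [k, x]) = sig n op (p1 @ [x, k])"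
    using sig_swap[OF cs, of p1 k x] Cons.prems by auto
  also have "fold (\<lambda>i f. stp n op f i) p2 (sig n op (p1 @ [x, k])) = sig n op ((p1 @ [x]) @ [k] @ p2)"
    using sig_append[of n op "p1 @ [x, k]" p2] by simp
  also have "\<dots> = sig n op ((p1 @ [x]) @ p2 @ [k])"
    using Cons.IH[of "p1 @ [x]"] Cons.prems by auto
  finally show ?case by simp
qed

lemma sig_mset:
  assumes cs: "cycle_set n op"
  shows "mset l = mset l' \<Longrightarrow> set l \<subseteq> {..<n} \<Longrightarrow> sig n op l = sig n op l'"
proof (induction l' arbitrary: l rule: rev_induct)
  case Nil
  then show ?case by simp
next
  case (snoc k q)
  have "k \<in> set l" using snoc.prems(1) by (metis mset_eq_setD in_set_conv_decomp)
  then obtain p1 p2 where l: "l = p1 @ k # p2" by (meson split_list)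
  have 1: "sig n op l = sig n op ((p1 @ p2) @ [k])"
    using sig_move[OF cs, of p1 k p2] snoc.prems l by simp
  have 2: "sig n op (p1 @ p2) = sig n op q"
    using snoc.IH[of "p1 @ p2"] snoc.prems l by auto
  have 3: "sig n op ((p1 @ p2) @ [k]) = stp n op (sig n op q) k" using 2 by (simp only: sig_snoc)
  show ?case using 1 3 by (simp only: sig_snoc)
qed

lemma sig_cocycle:
  assumes cs: "cycle_set n op" and p: "set p \<subseteq> {..<n}"
  shows "set q \<subseteq> {..<n} \<Longrightarrow> sig n op (p @ q) = sig n op (map (sig n op p) q) \<circ> sig n op p"
proof (induction q rule: rev_induct)
  case Nil
  then show ?case by simp
next
  case (snoc i q)
  let ?t = "sig n op p" and ?F = "sig n op (map (sig n op p) q)"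
  have IH: "sig n op (p @ q) = ?F \<circ> ?t" using snoc by auto
  have i: "i < n" using snoc by auto
  have "sig n op (p @ q @ [i]) = stp n op (?F \<circ> ?t) i"
    using IH by (metis append_assoc sig_snoc)
  moreover have "sig n op (map ?t (q @ [i])) \<circ> ?t = stp n op ?F (?t i) \<circ> ?t" by simp
  moreover have "stp n op (?F \<circ> ?t) i = stp n op ?F (?t i) \<circ> ?t"
    using sig_lt_iff[OF cs p] sig_out[OF cs p] by (auto simp: stp_def fun_eq_iff)
  ultimately show ?case by simp
qed

lemma T_map_eq: "T_map op = (\<lambda>a. op a a)"
  by (rule ext) (simp add: T_map_def)

lemma set_rep_lt: "s < n \<Longrightarrow> set (replicate k s) \<subseteq> {..<n}"
  by (induction k) auto

lemma sig_rep:
  assumes cs: "cycle_set n op" and s: "s < n"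
  shows "sig n op (replicate k s) s = (T_map op ^^ k) s \<and> (\<forall>x<n. sig n op (replicate k s) x = psik op k s x)"
proof (induction k)
  case 0
  then show ?case by simp
next
  case (Suc k)
  have e: "replicate (Suc k) s = replicate k s @ [s]" by (simp add: replicate_append_same)
  show ?case using Suc s unfolding e by (simp add: stp_def T_map_eq)
qed

lemma sig_rep_d:
  assumes cs: "cycle_set n op" and cl: "is_class n op d" and s: "s < n"
  shows "sig n op (replicate d s) = id"
proof
  fix x show "sig n op (replicate d s) x = id x"
  proof (cases "x < n")
    case True
    then show ?thesis using sig_rep[OF cs s, of d] cl s unfolding is_class_def by auto
  next
    case False
    then show ?thesis using sig_out[OF cs set_rep_lt[OF s], of x] by auto
  qed
qed

lemma sig_rep_dc:
  assumes cs: "cycle_set n op" and cl: "is_class n op d" and s: "s < n" and l: "set l \<subseteq> {..<n}"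
  shows "sig n op (l @ replicate (d * c) s) = sig n op l"
proof (induction c)
  case 0
  then show ?case by simp
next
  case (Suc c)
  have e: "l @ replicate (d * Suc c) s = (l @ replicate (d * c) s) @ replicate d s"
    by (simp add: replicate_add[symmetric] add.commute)
  have l2: "set (l @ replicate (d * c) s) \<subseteq> {..<n}" using l set_rep_lt[OF s] by auto
  have "sig n op ((l @ replicate (d * c) s) @ replicate d s)
     = sig n op (replicate d (sig n op (l @ replicate (d * c) s) s)) \<circ> sig n op (l @ replicate (d * c) s)"
    using sig_cocycle[OF cs l2 set_rep_lt[OF s]] by simp
  also have "sig n op (replicate d (sig n op (l @ replicate (d * c) s) s)) = id"
    using sig_rep_d[OF cs cl] sig_lt[OF cs l2 s] by auto
  finally show ?case using e Suc by simp
qed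



fun can :: "nat \<Rightarrow> (nat \<Rightarrow> nat) \<Rightarrow> nat list" where
  "can 0 v = []"
| "can (Suc m) v = can m v @ replicate (v m) m"

lemma can_set: "set (can m v) \<subseteq> {..<m}"
  by (induction m) auto

lemma can_count: "count (mset (can m v)) j = (if j < m then v j else 0)"
  by (induction m) auto

definition Sg :: "nat \<Rightarrow> (nat \<Rightarrow> nat \<Rightarrow> nat) \<Rightarrow> (nat \<Rightarrow> nat) \<Rightarrow> nat \<Rightarrow> nat" where
  "Sg n op v = sig n op (can n v)"

lemma count_image_inj: "inj f \<Longrightarrow> count (image_mset f M) (f a) = count M a"
  by (induction M) (auto simp: inj_eq)

context
  fixes n op assumes cs: "cycle_set n op"
begin

lemma Sg_list:
  assumes l: "set l \<subseteq> {..<n}" and c: "\<And>j. j < n \<Longrightarrow> count (mset l) j = v j"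
  shows "sig n op l = Sg n op v"
proof -
  have "mset l = mset (can n v)"
  proof (rule multiset_eqI)
    fix j show "count (mset l) j = count (mset (can n v)) j"
    proof (cases "j < n")
      case True then show ?thesis using c can_count by simp
    next
      case False
      then have "j \<notin> set l" using l by auto
      then show ?thesis using False can_count by (simp add: count_mset_0_iff)
    qed
  qed
  then show ?thesis unfolding Sg_def using sig_mset[OF cs _ l] by blast
qed

lemma Sg_cong: "(\<And>a. a < n \<Longrightarrow> v a = w a) \<Longrightarrow> Sg n op v = Sg n op w"
  using Sg_list[of "can n v" w] can_set can_count unfolding Sg_def by auto

lemma Sg_out: "x \<ge> n \<Longrightarrow> Sg n op v x = x"
  unfolding Sg_def using sig_out[OF cs can_set] by blast

lemma Sg_bij: "bij_betw (Sg n op v) {0..<n} {0..<n}"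
  unfolding Sg_def using sig_bij[OF cs can_set] by blast

lemma Sg_lt: "x < n \<Longrightarrow> Sg n op v x < n"
  unfolding Sg_def using sig_lt[OF cs can_set] by blast

lemma Sg_inj: "inj (Sg n op v)"
  unfolding Sg_def using sig_inj[OF cs can_set] by blast

lemma Sg_surj: "j < n \<Longrightarrow> \<exists>a<n. Sg n op v a = j"
  using Sg_bij[of v] unfolding bij_betw_def by (metis atLeastLessThan_iff imageE zero_le)

lemma Sg_cocycle: "Sg n op (\<lambda>a. v a + w (Sg n op v a)) = Sg n op w \<circ> Sg n op v"
proof -
  let ?p = "can n v" and ?t = "Sg n op v"
  let ?q = "can n (\<lambda>a. w (?t a))"
  have t: "sig n op ?p = ?t" unfolding Sg_def ..
  have "sig n op (?p @ ?q) = sig n op (map ?t ?q) \<circ> ?t"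
    using sig_cocycle[OF cs can_set can_set] t by simp
  moreover have "sig n op (?p @ ?q) = Sg n op (\<lambda>a. v a + w (?t a))"
  proof (rule Sg_list)
    show "set (?p @ ?q) \<subseteq> {..<n}" using can_set[of n v] can_set[of n "\<lambda>a. w (?t a)"] by simp
  qed (simp add: can_count)
  moreover have "sig n op (map ?t ?q) = Sg n op w"
  proof (rule Sg_list)
    show "set (map ?t ?q) \<subseteq> {..<n}" using can_set[of n "\<lambda>a. w (?t a)"] Sg_lt[of _ v] by auto
    fix j assume j: "j < n"
    then obtain a where a: "a < n" "?t a = j" using Sg_surj by blast
    have "count (mset (map ?t ?q)) j = count (mset ?q) a"
      using count_image_inj[OF Sg_inj[of v], of "mset ?q" a] a by simp
    also have "\<dots> = w j" using can_count a by simp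
    finally show "count (mset (map ?t ?q)) j = w j" .
  qed
  ultimately show ?thesis by simp
qed

lemma Sg_period:
  assumes cl: "is_class n op d"
  shows "Sg n op (\<lambda>a. v a + d * c a) = Sg n op v"
proof -
  let ?p = "can n v" and ?t = "Sg n op v"
  let ?u = "\<lambda>a. d * c a"
  have t: "sig n op ?p = ?t" unfolding Sg_def ..
  have "sig n op (?p @ can n ?u) = sig n op (map ?t (can n ?u)) \<circ> ?t"
    using sig_cocycle[OF cs can_set can_set] t by simp
  moreover have "sig n op (?p @ can n ?u) = Sg n op (\<lambda>a. v a + d * c a)"
  proof (rule Sg_list)
    show "set (?p @ can n ?u) \<subseteq> {..<n}" using can_set[of n v] can_set[of n ?u] by simp
  qed (simp add: can_count)
  moreover have "m \<le> n \<Longrightarrow> sig n op (map ?t (can m ?u)) = id" for m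
  proof (induction m)
    case 0
    then show ?case by simp
  next
    case (Suc m)
    have s: "set (map ?t (can m ?u)) \<subseteq> {..<n}" using can_set[of m ?u] Sg_lt[of _ v] Suc.prems by force
    have "sig n op (map ?t (can (Suc m) ?u)) = sig n op (map ?t (can m ?u) @ replicate (d * c m) (?t m))"
      by simp
    also have "\<dots> = sig n op (map ?t (can m ?u))"
      using sig_rep_dc[OF cs cl Sg_lt s] Suc.prems by simp
    finally show ?case using Suc by simp
  qed
  ultimately show ?thesis by simp
qed

lemma Sg_mod:
  assumes cl: "is_class n op d"
  shows "Sg n op v = Sg n op (\<lambda>a. v a mod d)"
proof -
  have "v = (\<lambda>a. v a mod d + d * (v a div d))" by (simp add: mod_mult_div_eq)
  then have "Sg n op v = Sg n op (\<lambda>a. v a mod d + d * (v a div d))" by simp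
  also have "\<dots> = Sg n op (\<lambda>a. v a mod d)" using Sg_period[OF cl] .
  finally show ?thesis .
qed

lemma Sg_e: "i < n \<Longrightarrow> Sg n op (\<lambda>a. if a = i then k else 0) = sig n op (replicate k i)"
  by (rule Sg_list[symmetric]) (auto simp: set_rep_lt)

lemma Sg_zero: "Sg n op (\<lambda>a. 0) = id"
  using Sg_list[of "[]" "\<lambda>a. 0"] by simp

end



definition zeta :: "nat \<Rightarrow> complex" where "zeta d = cis (2 * pi / real d)"

definition Mt :: "nat \<Rightarrow> (nat \<Rightarrow> nat \<Rightarrow> nat) \<Rightarrow> nat \<Rightarrow> (nat \<Rightarrow> nat) \<Rightarrow> complex mat" where
  "Mt n op d v = mat n n (\<lambda>(a, b). zeta d ^ v a * (if b = Sg n op v a then 1 else 0))"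

lemma Mt_carrier[simp]: "Mt n op d v \<in> carrier_mat n n"
  by (simp add: Mt_def)

lemma zeta_pow_d: "d > 0 \<Longrightarrow> zeta d ^ d = 1"
  unfolding zeta_def DeMoivre by simp

lemma zeta_pow_mod: "d > 0 \<Longrightarrow> zeta d ^ (x mod d) = zeta d ^ x"
proof -
  assume d: "d > 0"
  have "zeta d ^ x = zeta d ^ (d * (x div d) + x mod d)" by simp
  also have "\<dots> = (zeta d ^ d) ^ (x div d) * zeta d ^ (x mod d)" by (simp only: power_add power_mult)
  finally show ?thesis using zeta_pow_d[OF d] by simp
qed

lemma zeta_ne0[simp]: "zeta d \<noteq> 0"
  by (simp add: zeta_def)

lemma zeta_neq_aux:
  assumes d: "d > 0" and xy: "x < y" and yd: "y < d"
  shows "zeta d ^ x \<noteq> zeta d ^ y"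
proof
  assume e: "zeta d ^ x = zeta d ^ y"
  let ?th = "2 * pi / real d"
  have "cis (real x * ?th) = cis (real y * ?th)" using e unfolding zeta_def DeMoivre .
  then have "cis (real y * ?th) / cis (real x * ?th) = 1" by simp
  then have "cis (real y * ?th - real x * ?th) = 1" by (metis cis_divide)
  then have "cos (real y * ?th - real x * ?th) = 1" by (metis Re_complex_of_real cis.sel(1) complex_of_real_def one_complex.sel(1))
  then obtain m :: int where m: "real y * ?th - real x * ?th = real_of_int m * 2 * pi"
    using cos_one_2pi_int by blast
  have h: "real y * ?th - real x * ?th = (real y - real x) / real d * (2 * pi)" using d by (simp add: field_simps)
  have "(real y - real x) / real d * (2 * pi) = real_of_int m * (2 * pi)" by (metis h m mult.assoc)
  then have q: "(real y - real x) / real d = real_of_int m" by (metis mult_cancel_right mult_eq_0_iff pi_neq_zero zero_neq_numeral)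
  have "0 < (real y - real x) / real d" using xy d by simp
  moreover have "(real y - real x) / real d < 1" using xy yd d by (simp add: divide_less_eq)
  ultimately show False using q by (metis of_int_0_less_iff of_int_less_1_iff not_less zero_less_one int_one_le_iff_zero_less  less_le_not_le)
qed

lemma zeta_inj: "d > 0 \<Longrightarrow> x < d \<Longrightarrow> y < d \<Longrightarrow> zeta d ^ x = zeta d ^ y \<Longrightarrow> x = y"
  using zeta_neq_aux[of d x y] zeta_neq_aux[of d y x] by (metis linorder_neqE_nat)

context
  fixes n op assumes cs: "cycle_set n op"
begin

lemma Mt_cong: "(\<And>a. a < n \<Longrightarrow> v a = w a) \<Longrightarrow> Mt n op d v = Mt n op d w"
  using Sg_cong[OF cs, of v w] unfolding Mt_def by (intro eq_matI) auto

lemma Mt_mod: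
  assumes cl: "is_class n op d"
  shows "Mt n op d v = Mt n op d (\<lambda>a. v a mod d)"
proof -
  have d: "d > 0" using cl unfolding is_class_def by simp
  show ?thesis unfolding Mt_def Sg_mod[OF cs cl, of v] using zeta_pow_mod[OF d]
    by (intro eq_matI) auto
qed

lemma Mt_mult: "Mt n op d v * Mt n op d w = Mt n op d (\<lambda>a. v a + w (Sg n op v a))"
proof (rule eq_matI)
  let ?t = "Sg n op v" and ?u = "\<lambda>a. v a + w (Sg n op v a)"
  fix a b assume a: "a < dim_row (Mt n op d ?u)" and b: "b < dim_col (Mt n op d ?u)"
  then have a: "a < n" and b: "b < n" by (auto simp: Mt_def)
  have ta: "?t a < n" using Sg_lt[OF cs a] .
  have "(Mt n op d v * Mt n op d w) $$ (a, b) =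
        (\<Sum>c\<in>{0..<n}. Mt n op d v $$ (a, c) * Mt n op d w $$ (c, b))"
    using a b by (simp add: Mt_def scalar_prod_def)
  also have "\<dots> = (\<Sum>c\<in>{0..<n}. if c = ?t a then zeta d ^ v a * (zeta d ^ w (?t a) * (if b = Sg n op w (?t a) then 1 else 0)) else 0)"
    by (rule sum.cong) (auto simp: Mt_def a b ta)
  also have "\<dots> = zeta d ^ v a * (zeta d ^ w (?t a) * (if b = Sg n op w (?t a) then 1 else 0))"
    using ta by simp
  also have "\<dots> = Mt n op d ?u $$ (a, b)"
    using a b Sg_cocycle[OF cs, of v w] by (simp add: Mt_def power_add)
  finally show "(Mt n op d v * Mt n op d w) $$ (a, b) = Mt n op d ?u $$ (a, b)" .
qed (auto simp: Mt_def)

lemma Mt_zero: "Mt n op d (\<lambda>a. 0) = 1\<^sub>m n"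
  unfolding Mt_def Sg_zero[OF cs] by (intro eq_matI) auto

lemma sig_single: "sig n op [i] = stp n op id i"
  by (simp add: sig_def)

lemma bar_gen_Mt: "i < n \<Longrightarrow> bar_gen n op d i = Mt n op d (\<lambda>a. if a = i then 1 else 0)"
  unfolding Mt_def bar_gen_def Sg_e[OF cs] by (intro eq_matI) (auto simp: stp_def zeta_def sig_single)

lemma Mt_inj:
  assumes d: "d > 0" and v: "\<And>a. a < n \<Longrightarrow> v a < d" and w: "\<And>a. a < n \<Longrightarrow> w a < d"
    and e: "Mt n op d v = Mt n op d w" and a: "a < n"
  shows "v a = w a"
proof -
  have "Mt n op d v $$ (a, Sg n op v a) = Mt n op d w $$ (a, Sg n op v a)" using e by simp
  then have "zeta d ^ v a = zeta d ^ w a * (if Sg n op v a = Sg n op w a then 1 else 0)"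
    using a Sg_lt[OF cs a] by (simp add: Mt_def)
  then have "zeta d ^ v a = zeta d ^ w a" by (metis mult_zero_right mult.right_neutral power_not_zero zeta_ne0)
  then show ?thesis using zeta_inj[OF d v[OF a] w[OF a]] by simp
qed

end



lemma mod_cancel_aux:
  assumes "(v + x) mod d = (v + y) mod d" "x < d" "y < d" "x \<le> y"
  shows "(x::nat) = y"
proof -
  have "d dvd (v + y) - (v + x)" using mod_eq_dvd_iff_nat[of "v + x" "v + y" d] assms by simp
  then have dv: "d dvd y - x" by simp
  have "y - x < d" using assms by simp
  then have "y - x = 0" using dv nat_dvd_not_less by blast
  then show ?thesis using assms by simp
qed

lemma mod_cancel:
  assumes "(v + x) mod d = (v + y) mod d" "x < d" "y < d"
  shows "(x::nat) = y"
  using mod_cancel_aux[of v x d y] mod_cancel_aux[of v y d x] assms by (metis nat_le_linear)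

section \<open>GL is a group\<close>

lemma GL_simps[simp]:
  "carrier (GL n) = {A \<in> carrier_mat n n. invertible_mat A}"
  "monoid.mult (GL n) = (*)" "monoid.one (GL n) = 1\<^sub>m n"
  by (simp_all add: GL_def)

lemma inv_ex:
  assumes "A \<in> carrier_mat n n" "invertible_mat A"
  shows "\<exists>B \<in> carrier_mat n n. A * B = 1\<^sub>m n \<and> B * A = 1\<^sub>m n"
proof -
  obtain B where B: "A * B = 1\<^sub>m (dim_row A)" "B * A = 1\<^sub>m (dim_row B)"
    using assms(2) unfolding invertible_mat_def inverts_mat_def by blast
  have r: "dim_row A = n" "dim_col A = n" using assms(1) by auto
  have "dim_col B = n" using arg_cong[OF B(1), of dim_col] r by simp
  moreover have "dim_row B = n" using arg_cong[OF B(2), of dim_col] r by simp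
  ultimately show ?thesis using B r by (intro bexI[of _ B]) auto
qed

lemma invertibleI:
  assumes "A \<in> carrier_mat n n" "B \<in> carrier_mat n n" "A * B = 1\<^sub>m n" "B * A = 1\<^sub>m n"
  shows "invertible_mat A"
  using assms unfolding invertible_mat_def inverts_mat_def square_mat.simps by auto

lemma GL_group: "group (GL n)"
proof (rule groupI)
  fix x y assume x: "x \<in> carrier (GL n)" and y: "y \<in> carrier (GL n)"
  obtain x' where x': "x' \<in> carrier_mat n n" "x * x' = 1\<^sub>m n" "x' * x = 1\<^sub>m n" using inv_ex x by auto
  obtain y' where y': "y' \<in> carrier_mat n n" "y * y' = 1\<^sub>m n" "y' * y = 1\<^sub>m n" using inv_ex y by auto
  have xc: "x \<in> carrier_mat n n" and yc: "y \<in> carrier_mat n n" using x y by auto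
  have "(x * y) * (y' * x') = x * (y * (y' * x'))"
    using xc yc x' y' by (meson assoc_mult_mat mult_carrier_mat)
  also have "y * (y' * x') = (y * y') * x'"
    using xc yc x' y' by (meson assoc_mult_mat[symmetric] mult_carrier_mat)
  finally have 1: "(x * y) * (y' * x') = 1\<^sub>m n" using xc x' y' by simp
  have "(y' * x') * (x * y) = y' * (x' * (x * y))"
    using xc yc x' y' by (meson assoc_mult_mat mult_carrier_mat)
  also have "x' * (x * y) = (x' * x) * y"
    using xc yc x' y' by (meson assoc_mult_mat[symmetric] mult_carrier_mat)
  finally have 2: "(y' * x') * (x * y) = 1\<^sub>m n" using yc x' y' by simp
  show "x \<otimes>\<^bsub>GL n\<^esub> y \<in> carrier (GL n)"
    using invertibleI[OF _ _ 1 2] xc yc x' y' by auto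
next
  show "\<one>\<^bsub>GL n\<^esub> \<in> carrier (GL n)"
    using invertibleI[of "1\<^sub>m n" n "1\<^sub>m n"] by auto
next
  fix x y z assume "x \<in> carrier (GL n)" "y \<in> carrier (GL n)" "z \<in> carrier (GL n)"
  then show "x \<otimes>\<^bsub>GL n\<^esub> y \<otimes>\<^bsub>GL n\<^esub> z = x \<otimes>\<^bsub>GL n\<^esub> (y \<otimes>\<^bsub>GL n\<^esub> z)"
    by (simp add: assoc_mult_mat[of _ n n _ n _ n])
next
  fix x assume "x \<in> carrier (GL n)"
  then show "\<one>\<^bsub>GL n\<^esub> \<otimes>\<^bsub>GL n\<^esub> x = x" by (auto intro: left_mult_one_mat)
next
  fix x assume x: "x \<in> carrier (GL n)"
  obtain x' where x': "x' \<in> carrier_mat n n" "x * x' = 1\<^sub>m n" "x' * x = 1\<^sub>m n" using inv_ex x by auto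
  have "invertible_mat x'" using invertibleI[of x' n x] x' x by auto
  then show "\<exists>y\<in>carrier (GL n). y \<otimes>\<^bsub>GL n\<^esub> x = \<one>\<^bsub>GL n\<^esub>" using x' by auto
qed

section \<open>The sets X_m\<close>

definition VV :: "nat \<Rightarrow> nat \<Rightarrow> nat \<Rightarrow> (nat \<Rightarrow> nat) set" where
  "VV n d m = {v \<in> {0..<n} \<rightarrow>\<^sub>E {0..<d}. \<forall>a<n. m dvd v a}"

definition XX :: "nat \<Rightarrow> (nat \<Rightarrow> nat \<Rightarrow> nat) \<Rightarrow> nat \<Rightarrow> nat \<Rightarrow> complex mat set" where
  "XX n op d m = Mt n op d ` VV n d m"

definition red :: "nat \<Rightarrow> nat \<Rightarrow> (nat \<Rightarrow> nat) \<Rightarrow> nat \<Rightarrow> nat" where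
  "red n d u = restrict (\<lambda>a. u a mod d) {0..<n}"

lemma VV_finite: "finite (VV n d m)"
proof -
  have "VV n d m \<subseteq> {0..<n} \<rightarrow>\<^sub>E {0..<d}" unfolding VV_def by auto
  then show ?thesis using finite_PiE[of "{0..<n}" "\<lambda>_. {0..<d}"] finite_subset by auto
qed

lemma VV_sub: "VV n d m \<subseteq> VV n d 1"
  unfolding VV_def by auto

lemma VV_lt: "v \<in> VV n d m \<Longrightarrow> a < n \<Longrightarrow> v a < d"
  unfolding VV_def by auto

lemma VV_dvd: "v \<in> VV n d m \<Longrightarrow> a < n \<Longrightarrow> m dvd v a"
  unfolding VV_def by auto

lemma red_in:
  assumes "d > 0" "m dvd d" "\<And>a. a < n \<Longrightarrow> m dvd u a"
  shows "red n d u \<in> VV n d m"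
  using assms unfolding VV_def red_def by (auto simp: dvd_mod)

lemma VV_eqI: "v \<in> VV n d m \<Longrightarrow> w \<in> VV n d m' \<Longrightarrow> (\<And>a. a < n \<Longrightarrow> v a = w a) \<Longrightarrow> v = w"
  unfolding VV_def by (rule PiE_ext[of _ "{0..<n}" "\<lambda>_. {0..<d}"]) auto

context
  fixes n op d assumes cs: "cycle_set n op" and cl: "is_class n op d"
begin

lemma d_pos: "d > 0"
  using cl unfolding is_class_def by simp

lemma Mt_red: "Mt n op d (red n d u) = Mt n op d u"
proof -
  have "Mt n op d (red n d u) = Mt n op d (\<lambda>a. u a mod d)"
    by (rule Mt_cong[OF cs]) (simp add: red_def)
  also have "\<dots> = Mt n op d u" using Mt_mod[OF cs cl, of u] by simp
  finally show ?thesis .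
qed

lemma Mt_inj_VV: "inj_on (Mt n op d) (VV n d m)"
proof (rule inj_onI)
  fix v w assume v: "v \<in> VV n d m" and w: "w \<in> VV n d m" and e: "Mt n op d v = Mt n op d w"
  show "v = w"
    by (rule VV_eqI[OF v w]) (rule Mt_inj[OF cs d_pos _ _ e], auto intro: VV_lt[OF v] VV_lt[OF w])
qed

lemma card_XX: "card (XX n op d m) = card (VV n d m)"
  unfolding XX_def using Mt_inj_VV card_image by blast

lemma XX_mult:
  assumes m: "m dvd d" and x: "x \<in> XX n op d m" and y: "y \<in> XX n op d m"
  shows "x * y \<in> XX n op d m"
proof -
  obtain v w where v: "v \<in> VV n d m" "x = Mt n op d v" and w: "w \<in> VV n d m" "y = Mt n op d w"
    using x y unfolding XX_def by auto
  let ?u = "\<lambda>a. v a + w (Sg n op v a)"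
  have "x * y = Mt n op d ?u" using v w Mt_mult[OF cs] by simp
  also have "\<dots> = Mt n op d (red n d ?u)" using Mt_red by simp
  finally show ?thesis unfolding XX_def
    using red_in[OF d_pos m, of n ?u] VV_dvd[OF v(1)] VV_dvd[OF w(1)] Sg_lt[OF cs] by auto
qed

lemma VV_rinv:
  assumes m: "m dvd d" and v: "v \<in> VV n d m"
  shows "\<exists>w \<in> VV n d m. Mt n op d v * Mt n op d w = 1\<^sub>m n"
proof -
  let ?t = "Sg n op v"
  define f where "f w = red n d (\<lambda>a. v a + w (?t a))" for w
  have fin: "f ` VV n d m \<subseteq> VV n d m"
    unfolding f_def using red_in[OF d_pos m] VV_dvd[OF v] VV_dvd Sg_lt[OF cs] by auto
  have inj: "inj_on f (VV n d m)"
  proof (rule inj_onI)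
    fix w w' assume w: "w \<in> VV n d m" and w': "w' \<in> VV n d m" and e: "f w = f w'"
    show "w = w'"
    proof (rule VV_eqI[OF w w'])
      fix j assume j: "j < n"
      then obtain a where a: "a < n" "?t a = j" using Sg_surj[OF cs] by blast
      have "f w a = f w' a" using e by simp
      then have "(v a + w j) mod d = (v a + w' j) mod d" using a by (simp add: f_def red_def)
      then show "w j = w' j" using mod_cancel VV_lt[OF w j] VV_lt[OF w' j] by blast
    qed
  qed
  have "f ` VV n d m = VV n d m" using endo_inj_surj[OF VV_finite fin inj] .
  moreover have z: "red n d (\<lambda>a. 0) \<in> VV n d m" using red_in[OF d_pos m] by auto
  ultimately obtain w where w: "w \<in> VV n d m" "f w = red n d (\<lambda>a. 0)" by (metis imageE)
  have "Mt n op d v * Mt n op d w = Mt n op d (f w)"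
    unfolding f_def Mt_red Mt_mult[OF cs] ..
  also have "\<dots> = 1\<^sub>m n" using w(2) Mt_red Mt_zero[OF cs] by simp
  finally show ?thesis using w by blast
qed

lemma VV_inv:
  assumes m: "m dvd d" and v: "v \<in> VV n d m"
  shows "\<exists>w \<in> VV n d m. Mt n op d v * Mt n op d w = 1\<^sub>m n \<and> Mt n op d w * Mt n op d v = 1\<^sub>m n"
proof -
  obtain w where w: "w \<in> VV n d m" "Mt n op d v * Mt n op d w = 1\<^sub>m n" using VV_rinv[OF m v] by blast
  obtain w' where w': "w' \<in> VV n d m" "Mt n op d w * Mt n op d w' = 1\<^sub>m n" using VV_rinv[OF m w(1)] by blast
  have "Mt n op d v = Mt n op d v * (Mt n op d w * Mt n op d w')" using w' right_mult_one_mat[OF Mt_carrier] by simp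
  also have "\<dots> = (Mt n op d v * Mt n op d w) * Mt n op d w'"
    by (meson assoc_mult_mat[symmetric] Mt_carrier)
  also have "\<dots> = Mt n op d w'" using w left_mult_one_mat[OF Mt_carrier] by simp
  finally have "Mt n op d w * Mt n op d v = 1\<^sub>m n" using w' by simp
  then show ?thesis using w by blast
qed

lemma XX_subgroup:
  assumes m: "m dvd d"
  shows "subgroup (XX n op d m) (GL n)"
proof (rule group.subgroupI[OF GL_group])
  show "XX n op d m \<subseteq> carrier (GL n)"
  proof
    fix x assume "x \<in> XX n op d m"
    then obtain v where v: "v \<in> VV n d m" "x = Mt n op d v" unfolding XX_def by auto
    obtain w where "w \<in> VV n d m" "Mt n op d v * Mt n op d w = 1\<^sub>m n" "Mt n op d w * Mt n op d v = 1\<^sub>m n"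
      using VV_inv[OF m v(1)] by blast
    then show "x \<in> carrier (GL n)" using v invertibleI[of "Mt n op d v" n "Mt n op d w"] by auto
  qed
  show "XX n op d m \<noteq> {}" using red_in[OF d_pos m, of n "\<lambda>a. 0"] unfolding XX_def by auto
next
  fix x assume "x \<in> XX n op d m"
  then obtain v where v: "v \<in> VV n d m" "x = Mt n op d v" unfolding XX_def by auto
  obtain w where w: "w \<in> VV n d m" "Mt n op d v * Mt n op d w = 1\<^sub>m n" "Mt n op d w * Mt n op d v = 1\<^sub>m n"
    using VV_inv[OF m v(1)] by blast
  have c: "Mt n op d v \<in> carrier (GL n)" "Mt n op d w \<in> carrier (GL n)"
    using invertibleI[of "Mt n op d v" n "Mt n op d w"] invertibleI[of "Mt n op d w" n "Mt n op d v"] w by auto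
  have "inv\<^bsub>GL n\<^esub> (Mt n op d v) = Mt n op d w"
    using group.inv_equality[OF GL_group[of n], where x = "Mt n op d v" and y = "Mt n op d w"] w c by simp
  then show "inv\<^bsub>GL n\<^esub> x \<in> XX n op d m" using v w unfolding XX_def by auto
next
  fix x y assume "x \<in> XX n op d m" "y \<in> XX n op d m"
  then show "x \<otimes>\<^bsub>GL n\<^esub> y \<in> XX n op d m" using XX_mult[OF m] by simp
qed

end



lemma foldr_mat:
  fixes B :: "nat \<Rightarrow> complex mat"
  assumes B: "\<And>j. B j \<in> carrier_mat n n" and A: "A \<in> carrier_mat n n"
  shows "foldr (\<lambda>j acc. B j * acc) xs A = foldr (\<lambda>j acc. B j * acc) xs (1\<^sub>m n) * A
         \<and> foldr (\<lambda>j acc. B j * acc) xs (1\<^sub>m n) \<in> carrier_mat n n"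
proof (induction xs)
  case Nil
  then show ?case using left_mult_one_mat[OF A] by simp
next
  case (Cons x xs)
  let ?F = "foldr (\<lambda>j acc. B j * acc) xs (1\<^sub>m n)"
  have "B x * (?F * A) = (B x * ?F) * A"
    using Cons B A by (meson assoc_mult_mat[symmetric])
  then show ?case using Cons B mult_carrier_mat[OF B[of x]] by simp
qed

context
  fixes n op d assumes cs: "cycle_set n op" and cl: "is_class n op d"
begin

lemma path_gen:
  fixes H :: "complex mat monoid"
  assumes Hm: "monoid.mult H = (*)" and Ho: "monoid.one H = 1\<^sub>m n"
  shows "set l \<subseteq> {..<n} \<Longrightarrow> Mt n op d (\<lambda>a. k * count (mset l) a)
           \<in> generate H ((\<lambda>s. Mt n op d (\<lambda>a. if a = s then k else 0)) ` {0..<n})"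
proof (induction l rule: rev_induct)
  case Nil
  have "Mt n op d (\<lambda>a. k * count (mset []) a) = \<one>\<^bsub>H\<^esub>" using Mt_zero[OF cs] Ho by simp
  then show ?case using generate.one[of H] by simp
next
  case (snoc i l)
  let ?c = "\<lambda>a. k * count (mset l) a"
  let ?t = "Sg n op ?c"
  have i: "i < n" using snoc.prems by simp
  have ti: "?t i < n" using Sg_lt[OF cs i] .
  have g: "Mt n op d (\<lambda>a. if a = ?t i then k else 0) \<in> generate H ((\<lambda>s. Mt n op d (\<lambda>a. if a = s then k else 0)) ` {0..<n})"
    using ti by (intro generate.incl) auto
  have h: "Mt n op d ?c \<in> generate H ((\<lambda>s. Mt n op d (\<lambda>a. if a = s then k else 0)) ` {0..<n})"
    using snoc by simp
  have "Mt n op d ?c * Mt n op d (\<lambda>a. if a = ?t i then k else 0) =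
        Mt n op d (\<lambda>a. ?c a + (if ?t a = ?t i then k else 0))"
    using Mt_mult[OF cs] by simp
  also have "(\<lambda>a. ?c a + (if ?t a = ?t i then k else 0)) = (\<lambda>a. k * count (mset (l @ [i])) a)"
  proof
    fix a
    have "(?t a = ?t i) = (a = i)" using Sg_inj[OF cs] by (auto dest: injD)
    then show "?c a + (if ?t a = ?t i then k else 0) = k * count (mset (l @ [i])) a"
      by auto
  qed
  finally show ?case using generate.eng[OF h g] Hm by simp
qed

lemma VV_gen:
  fixes H :: "complex mat monoid"
  assumes Hm: "monoid.mult H = (*)" and Ho: "monoid.one H = 1\<^sub>m n" and v: "v \<in> VV n d k"
  shows "Mt n op d v \<in> generate H ((\<lambda>s. Mt n op d (\<lambda>a. if a = s then k else 0)) ` {0..<n})"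
proof -
  let ?l = "can n (\<lambda>a. v a div k)"
  have "Mt n op d v = Mt n op d (\<lambda>a. k * count (mset ?l) a)"
    by (rule Mt_cong[OF cs]) (simp add: can_count VV_dvd[OF v])
  then show ?thesis using path_gen[OF Hm Ho can_set] by simp
qed

lemma gens_in:
  assumes k: "k dvd d"
  shows "(\<lambda>s. Mt n op d (\<lambda>a. if a = s then k else 0)) ` {0..<n} \<subseteq> XX n op d k"
proof
  fix x assume "x \<in> (\<lambda>s. Mt n op d (\<lambda>a. if a = s then k else 0)) ` {0..<n}"
  then obtain s where x: "x = Mt n op d (\<lambda>a. if a = s then k else 0)" by auto
  have "x = Mt n op d (red n d (\<lambda>a. if a = s then k else 0))" using x Mt_red[OF cs cl] by simp
  moreover have "red n d (\<lambda>a. if a = s then k else 0) \<in> VV n d k"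
    by (rule red_in[OF d_pos[OF cs cl] k]) auto
  ultimately show "x \<in> XX n op d k" unfolding XX_def by auto
qed

lemma bar_gen_image: "bar_gen n op d ` {0..<n} = (\<lambda>s. Mt n op d (\<lambda>a. if a = s then 1 else 0)) ` {0..<n}"
  using bar_gen_Mt[OF cs] by (intro image_cong) auto

lemma carrier_germ: "carrier (germ n op d) = XX n op d 1"
proof -
  have "generate (GL n) (bar_gen n op d ` {0..<n}) = XX n op d 1"
  proof
    show "generate (GL n) (bar_gen n op d ` {0..<n}) \<subseteq> XX n op d 1"
      using group.generate_subgroup_incl[OF GL_group gens_in[of 1] XX_subgroup[OF cs cl, of 1]]
      unfolding bar_gen_image by simp
    show "XX n op d 1 \<subseteq> generate (GL n) (bar_gen n op d ` {0..<n})"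
      unfolding bar_gen_image XX_def using VV_gen[of "GL n"] by auto
  qed
  then show ?thesis by (simp add: germ_def)
qed

lemma germ_eq: "germ n op d = (GL n)\<lparr>carrier := XX n op d 1\<rparr>"
  using carrier_germ by (simp add: germ_def)

lemma germ_group: "group (germ n op d)"
  unfolding germ_eq using group.subgroup_imp_group[OF GL_group XX_subgroup[OF cs cl, of 1]] by simp

lemma germ_simps[simp]: "monoid.mult (germ n op d) = (*)" "monoid.one (germ n op d) = 1\<^sub>m n"
  by (simp_all add: germ_def)

lemma XX_sub_germ:
  assumes k: "k dvd d"
  shows "subgroup (XX n op d k) (germ n op d)"
  unfolding germ_eq
  by (rule group.subgroup_incl[OF GL_group XX_subgroup[OF cs cl k] XX_subgroup[OF cs cl, of 1]])
     (simp, unfold XX_def, rule image_mono[OF VV_sub])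

lemma Tk_lt: assumes s: "s < n" shows "(T_map op ^^ k) s < n"
  using sig_rep[OF cs s, of k] sig_lt[OF cs set_rep_lt[OF s, of k] s] by simp

lemma bar_pow_Mt:
  assumes s: "s < n"
  shows "bar_pow n op d k s = Mt n op d (\<lambda>a. if a = s then k else 0)"
proof (induction k)
  case 0
  then show ?case using Mt_zero[OF cs] by (simp add: bar_pow_def)
next
  case (Suc k)
  let ?B = "\<lambda>j. bar_gen n op d ((T_map op ^^ j) s)"
  have B: "\<And>j. ?B j \<in> carrier_mat n n" by (simp add: bar_gen_def)
  have "bar_pow n op d (Suc k) s = foldr (\<lambda>j acc. ?B j * acc) [0..<k] (?B k * 1\<^sub>m n)"
    by (simp add: bar_pow_def)
  also have "\<dots> = bar_pow n op d k s * (?B k * 1\<^sub>m n)"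
    using foldr_mat[OF B, where A = "?B k * 1\<^sub>m n" and xs = "[0..<k]"] B[of k] unfolding bar_pow_def by simp
  also have "\<dots> = bar_pow n op d k s * ?B k" using B[of k] by simp
  also have "\<dots> = Mt n op d (\<lambda>a. if a = s then k else 0) * Mt n op d (\<lambda>a. if a = (T_map op ^^ k) s then 1 else 0)"
    using Suc bar_gen_Mt[OF cs Tk_lt[OF s]] by simp
  also have "\<dots> = Mt n op d (\<lambda>a. (if a = s then k else 0) + (if sig n op (replicate k s) a = (T_map op ^^ k) s then 1 else 0))"
    using Mt_mult[OF cs] Sg_e[OF cs s] by simp
  also have "(\<lambda>a. (if a = s then k else 0) + (if sig n op (replicate k s) a = (T_map op ^^ k) s then 1 else 0))
      = (\<lambda>a. if a = s then Suc k else 0)"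
  proof
    fix a
    have e: "sig n op (replicate k s) s = (T_map op ^^ k) s" using sig_rep[OF cs s] by simp
    have "(sig n op (replicate k s) a = sig n op (replicate k s) s) = (a = s)"
      using sig_inj[OF cs set_rep_lt[OF s]] by (auto dest: injD)
    then show "(if a = s then k else 0) + (if sig n op (replicate k s) a = (T_map op ^^ k) s then 1 else 0)
      = (if a = s then Suc k else 0)" using e by auto
  qed
  finally show ?case .
qed

lemma germ_k_eq:
  assumes k: "k dvd d"
  shows "germ_k n op d k = XX n op d k"
proof -
  have im: "bar_pow n op d k ` {0..<n} = (\<lambda>s. Mt n op d (\<lambda>a. if a = s then k else 0)) ` {0..<n}"
    using bar_pow_Mt by (intro image_cong) auto
  show ?thesis unfolding germ_k_def im
  proof
    show "generate (germ n op d) ((\<lambda>s. Mt n op d (\<lambda>a. if a = s then k else 0)) ` {0..<n}) \<subseteq> XX n op d k"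
      using group.generate_subgroup_incl[OF germ_group gens_in[OF k] XX_sub_germ[OF k]] .
    show "XX n op d k \<subseteq> generate (germ n op d) ((\<lambda>s. Mt n op d (\<lambda>a. if a = s then k else 0)) ` {0..<n})"
      unfolding XX_def using VV_gen[of "germ n op d"] by auto
  qed
qed

end



lemma card_dvd_set:
  assumes m: "m > 0" "m dvd (d::nat)"
  shows "card {x \<in> {0..<d}. m dvd x} = d div m"
proof -
  obtain q where q: "d = m * q" using m by blast
  have "{x \<in> {0..<d}. m dvd x} = (\<lambda>y. m * y) ` {0..<q}"
  proof
    show "{x \<in> {0..<d}. m dvd x} \<subseteq> (\<lambda>y. m * y) ` {0..<q}"
    proof
      fix x assume x: "x \<in> {x \<in> {0..<d}. m dvd x}"
      then obtain y where y: "x = m * y" by auto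
      then have "y < q" using x q m by auto
      then show "x \<in> (\<lambda>y. m * y) ` {0..<q}" using y by auto
    qed
    show "(\<lambda>y. m * y) ` {0..<q} \<subseteq> {x \<in> {0..<d}. m dvd x}" using q m by auto
  qed
  moreover have "inj_on (\<lambda>y. m * y) {0..<q}" using m by (auto intro: inj_onI)
  ultimately show ?thesis using q m by (simp add: card_image)
qed

lemma card_VV:
  assumes m: "m > 0" "m dvd (d::nat)"
  shows "card (VV n d m) = (d div m) ^ n"
proof -
  have "VV n d m = {0..<n} \<rightarrow>\<^sub>E {x \<in> {0..<d}. m dvd x}"
    unfolding VV_def by (auto simp: PiE_iff extensional_def)
  then show ?thesis using card_dvd_set[OF m] by (simp add: card_PiE)
qed

context
  fixes n op d assumes cs: "cycle_set n op" and cl: "is_class n op d"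
begin

lemma XX_d: "XX n op d d = {1\<^sub>m n}"
proof
  show "XX n op d d \<subseteq> {1\<^sub>m n}"
  proof
    fix x assume "x \<in> XX n op d d"
    then obtain v where v: "v \<in> VV n d d" "x = Mt n op d v" unfolding XX_def by auto
    have z: "v a = 0" if a: "a < n" for a
    proof (rule ccontr)
      assume "v a \<noteq> 0"
      then show False using nat_dvd_not_less[of "v a" d] VV_lt[OF v(1) a] VV_dvd[OF v(1) a] by simp
    qed
    have "Mt n op d v = Mt n op d (\<lambda>a. 0)" by (rule Mt_cong[OF cs]) (rule z)
    then have "x = Mt n op d (\<lambda>a. 0)" using v(2) by simp
    then show "x \<in> {1\<^sub>m n}" using Mt_zero[OF cs] by simp
  qed
  have "red n d (\<lambda>a. 0) \<in> VV n d d" using red_in[OF d_pos[OF cs cl], of d n] by auto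
  moreover have "Mt n op d (red n d (\<lambda>a. 0)) = 1\<^sub>m n" using Mt_red[OF cs cl] Mt_zero[OF cs] by simp
  ultimately have "1\<^sub>m n \<in> XX n op d d" unfolding XX_def by (metis image_eqI)
  then show "{1\<^sub>m n} \<subseteq> XX n op d d" by simp
qed

lemma set_mult_XX:
  assumes k: "k dvd d" and l: "l dvd d"
  shows "XX n op d k <#>\<^bsub>germ n op d\<^esub> XX n op d l = XX n op d (gcd k l)"
proof
  have d0: "d > 0" using d_pos[OF cs cl] .
  have g: "gcd k l dvd d" using k by (meson dvd_trans gcd_dvd1)
  show "XX n op d k <#>\<^bsub>germ n op d\<^esub> XX n op d l \<subseteq> XX n op d (gcd k l)"
  proof
    fix x assume "x \<in> XX n op d k <#>\<^bsub>germ n op d\<^esub> XX n op d l"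
    then obtain v w where v: "v \<in> VV n d k" and w: "w \<in> VV n d l" and x: "x = Mt n op d v * Mt n op d w"
      unfolding set_mult_def XX_def germ_simps[OF cs cl] by auto
    let ?u = "\<lambda>a. v a + w (Sg n op v a)"
    have "x = Mt n op d (red n d ?u)" using x Mt_mult[OF cs] Mt_red[OF cs cl] by simp
    moreover have "red n d ?u \<in> VV n d (gcd k l)"
    proof (rule red_in[OF d0 g])
      fix a assume a: "a < n"
      have "gcd k l dvd v a" using VV_dvd[OF v a] by (meson dvd_trans gcd_dvd1)
      moreover have "gcd k l dvd w (Sg n op v a)" using VV_dvd[OF w Sg_lt[OF cs a]] by (meson dvd_trans gcd_dvd2)
      ultimately show "gcd k l dvd ?u a" by simp
    qed
    ultimately show "x \<in> XX n op d (gcd k l)" unfolding XX_def by auto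
  qed
  show "XX n op d (gcd k l) \<subseteq> XX n op d k <#>\<^bsub>germ n op d\<^esub> XX n op d l"
  proof
    fix x assume "x \<in> XX n op d (gcd k l)"
    then obtain u where u: "u \<in> VV n d (gcd k l)" and x: "x = Mt n op d u" unfolding XX_def by auto
    have k0: "k \<noteq> 0" using k d0 by auto
    obtain p q where pq: "k * p = l * q + gcd k l" using bezout_nat[OF k0, of l] by blast
    define c where "c a = u a div gcd k l" for a
    have uc: "u a = gcd k l * c a" if "a < n" for a
      using VV_dvd[OF u that] unfolding c_def by simp
    define v where "v = red n d (\<lambda>a. k * p * c a)"
    let ?t = "Sg n op v"
    define w where "w = red n d (\<lambda>j. l * q * (d - 1) * c (inv_into {0..<n} ?t j))"
    have v: "v \<in> VV n d k" unfolding v_def by (rule red_in[OF d0 k]) simp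
    have w: "w \<in> VV n d l" unfolding w_def by (rule red_in[OF d0 l]) simp
    have inv: "inv_into {0..<n} ?t (?t a) = a" if "a < n" for a
      using Sg_bij[OF cs, of v] that by (simp add: bij_betw_def inv_into_f_f)
    have "Mt n op d v * Mt n op d w = Mt n op d (\<lambda>a. v a + w (?t a))" using Mt_mult[OF cs] by simp
    also have "\<dots> = Mt n op d (\<lambda>a. (v a + w (?t a)) mod d)" using Mt_mod[OF cs cl] by simp
    also have "\<dots> = Mt n op d u"
    proof (rule Mt_cong[OF cs])
      fix a assume a: "a < n"
      have ta: "?t a < n" using Sg_lt[OF cs a] .
      have "(v a + w (?t a)) mod d = ((k * p * c a) mod d + (l * q * (d - 1) * c a) mod d) mod d"
        using a ta inv[OF a] by (simp add: v_def w_def red_def)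
      also have "\<dots> = (k * p * c a + l * q * (d - 1) * c a) mod d" by (simp add: mod_add_eq)
      also have "k * p * c a + l * q * (d - 1) * c a = gcd k l * c a + d * (l * q * c a)"
      proof -
        have "k * p * c a + l * q * (d - 1) * c a = (l * q + gcd k l) * c a + l * q * (d - 1) * c a"
          using pq by simp
        also have "\<dots> = gcd k l * c a + (l * q * c a) * (1 + (d - 1))" by (simp add: algebra_simps)
        also have "1 + (d - 1) = d" using d0 by simp
        finally show ?thesis by (simp add: algebra_simps)
      qed
      also have "(gcd k l * c a + d * (l * q * c a)) mod d = (gcd k l * c a) mod d" by simp
      also have "\<dots> = u a" using uc[OF a] VV_lt[OF u a] by simp
      finally show "(v a + w (?t a)) mod d = u a" .
    qed
    finally have "x = Mt n op d v * Mt n op d w" using x by simp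
    then show "x \<in> XX n op d k <#>\<^bsub>germ n op d\<^esub> XX n op d l"
      unfolding set_mult_def XX_def germ_simps[OF cs cl] using v w by auto
  qed
qed

end

lemma beta_dvd: "(d::nat) div p ^ multiplicity p d dvd d"
proof -
  have "p ^ multiplicity p d dvd d" by (rule multiplicity_dvd)
  then have "d div p ^ multiplicity p d * p ^ multiplicity p d = d" by (rule dvd_div_mult_self)
  then show ?thesis by (metis dvd_triv_left)
qed

lemma foldr_gcd_dvd: "foldr (\<lambda>p a. gcd (f p) a) ps (d::nat) dvd d"
  by (induction ps) (auto intro: dvd_trans)

lemma foldr_gcd_dvd2: "p \<in> set ps \<Longrightarrow> foldr (\<lambda>p a. gcd (f p) a) ps (d::nat) dvd f p"
  by (induction ps) (auto intro: dvd_trans)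

lemma foldr_gcd_one:
  assumes d: "(d::nat) > 0" and ps: "set ps = prime_factors d"
  shows "foldr (\<lambda>p a. gcd (d div p ^ multiplicity p d) a) ps d = 1"
proof (rule ccontr)
  let ?g = "foldr (\<lambda>p a. gcd (d div p ^ multiplicity p d) a) ps d"
  assume "?g \<noteq> 1"
  then obtain q where q: "prime q" "q dvd ?g" using prime_factor_nat by blast
  have "q dvd d" using dvd_trans[OF q(2) foldr_gcd_dvd] .
  then have qs: "q \<in> set ps" using ps q d by (simp add: in_prime_factors_iff)
  have "q dvd d div q ^ multiplicity q d" using dvd_trans[OF q(2) foldr_gcd_dvd2[OF qs]] .
  moreover have "\<not> q dvd d div q ^ multiplicity q d"
    using multiplicity_decompose[of d q] d q using prime_gt_1_nat[OF q(1)] by simp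
  ultimately show False by simp
qed



lemma foldr_germ:
  assumes cs: "cycle_set n op" and cl: "is_class n op d"
  shows "foldr (\<lambda>p acc. germ_k n op d (d div p ^ multiplicity p d) <#>\<^bsub>germ n op d\<^esub> acc) ps {\<one>\<^bsub>germ n op d\<^esub>}
       = XX n op d (foldr (\<lambda>p a. gcd (d div p ^ multiplicity p d) a) ps d)"
proof (induction ps)
  case Nil
  then show ?case using XX_d[OF cs cl] germ_simps[OF cs cl] by simp
next
  case (Cons p ps)
  have "foldr (\<lambda>p a. gcd (d div p ^ multiplicity p d) a) ps d dvd d" by (rule foldr_gcd_dvd)
  then show ?case
    using Cons germ_k_eq[OF cs cl beta_dvd[of d p]] set_mult_XX[OF cs cl beta_dvd[of d p]] by simp
qed

theorem mainTheorem3: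
  fixes n d :: nat and op :: "nat \<Rightarrow> nat \<Rightarrow> nat"
  assumes "cycle_set n op" and "is_class n op d" and "d > 1"
  shows "(\<forall>p \<in> prime_factors d.
            sylow_subgroup (germ n op d) p (germ_k n op d (d div p ^ multiplicity p d)))
       \<and> (\<forall>p \<in> prime_factors d. \<forall>q \<in> prime_factors d.
            germ_k n op d (d div p ^ multiplicity p d) <#>\<^bsub>germ n op d\<^esub> germ_k n op d (d div q ^ multiplicity q d)
          = germ_k n op d (d div q ^ multiplicity q d) <#>\<^bsub>germ n op d\<^esub> germ_k n op d (d div p ^ multiplicity p d))
       \<and> (\<forall>ps. distinct ps \<and> set ps = prime_factors d \<longrightarrow>
            carrier (germ n op d) =
              foldr (\<lambda>p acc. germ_k n op d (d div p ^ multiplicity p d) <#>\<^bsub>germ n op d\<^esub> acc) ps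
                {\<one>\<^bsub>germ n op d\<^esub>})"
proof -
  note cs = assms(1) and cl = assms(2)
  have d0: "d > 0" using assms(3) by simp
  have gk: "germ_k n op d (d div p ^ multiplicity p d) = XX n op d (d div p ^ multiplicity p d)" for p
    using germ_k_eq[OF cs cl beta_dvd] .
  have ord: "order (germ n op d) = d ^ n"
    unfolding order_def carrier_germ[OF cs cl] using card_XX[OF cs cl] card_VV[of 1 d n] by simp
  have P1: "\<forall>p \<in> prime_factors d.
            sylow_subgroup (germ n op d) p (germ_k n op d (d div p ^ multiplicity p d))"
  proof
    fix p assume p: "p \<in> prime_factors d"
    then have pp: "prime p" by (simp add: in_prime_factors_iff)
    let ?a = "multiplicity p d"
    let ?b = "d div p ^ ?a"
    have e: "?b * p ^ ?a = d" by (rule dvd_div_mult_self[OF multiplicity_dvd])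
    have bpos: "?b > 0" using e d0 by (metis gr0I mult_0)
    have dd: "d div ?b = p ^ ?a" using e bpos by (metis nonzero_mult_div_cancel_left less_not_refl2)
    have c: "card (germ_k n op d ?b) = (p ^ ?a) ^ n"
      using gk card_XX[OF cs cl] card_VV[OF bpos beta_dvd] dd by simp
    have m: "multiplicity p (d ^ n) = n * ?a"
      using prime_elem_multiplicity_power_distrib[of p d n] pp d0 by simp
    have pw: "(p ^ ?a) ^ n = p ^ (n * ?a)" by (metis power_mult mult.commute)
    show "sylow_subgroup (germ n op d) p (germ_k n op d ?b)"
      unfolding sylow_subgroup_def using XX_sub_germ[OF cs cl beta_dvd] gk c m ord
      by (simp add: pw)
  qed
  have P2: "\<forall>p \<in> prime_factors d. \<forall>q \<in> prime_factors d.
            germ_k n op d (d div p ^ multiplicity p d) <#>\<^bsub>germ n op d\<^esub> germ_k n op d (d div q ^ multiplicity q d)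
          = germ_k n op d (d div q ^ multiplicity q d) <#>\<^bsub>germ n op d\<^esub> germ_k n op d (d div p ^ multiplicity p d)"
    by (simp add: gk set_mult_XX[OF cs cl beta_dvd beta_dvd] gcd.commute)
  have P3: "\<forall>ps. distinct ps \<and> set ps = prime_factors d \<longrightarrow>
            carrier (germ n op d) =
              foldr (\<lambda>p acc. germ_k n op d (d div p ^ multiplicity p d) <#>\<^bsub>germ n op d\<^esub> acc) ps
                {\<one>\<^bsub>germ n op d\<^esub>}"
  proof (intro allI impI)
    fix ps assume ps: "distinct ps \<and> set ps = prime_factors d"
    show "carrier (germ n op d) =
              foldr (\<lambda>p acc. germ_k n op d (d div p ^ multiplicity p d) <#>\<^bsub>germ n op d\<^esub> acc) ps
                {\<one>\<^bsub>germ n op d\<^esub>}"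
      unfolding foldr_germ[OF cs cl] foldr_gcd_one[OF d0 ps[THEN conjunct2]] carrier_germ[OF cs cl] ..
  qed
  show ?thesis using P1 P2 P3 by blast
qed


end
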